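(* Let $G=(V,E)$ and $\hat G=(V,\hat E)$ be connected graphs with $\hat E\subseteq E$, let $A\subseteq V$ be nonempty and let $U\subseteq V$. If $\delta(u,v)=\hat\delta(u,v)$ for every pair $(u,v)\in\Big(\bigcup_{a\in A}\hat N_2(a)\Big)\times U$, then $D_a=\hat D_a$ for every $a\in A$.
   Context: $\delta$, $\hat\delta$ are the shortest-path metrics of the unweighted graphs $G$, $\hat G$. For $S\subseteq V$, $\delta(S,v)=\min_{s\in S}\delta(s,v)$ and similarly for $\hat\delta$. $N_2(a)=\{u\in V:\delta(u,a)\le2\}$ and $\hat N_2(a)=\{u\in V:\hat\delta(u,a)\le2\}$. For $w\in V$, $C_A(w)=\{v\in V:\delta(w,v)<\delta(A,v)\}$ and $\hat C_A(w)=\{v\in V:\hat\delta(w,v)<\hat\delta(A,v)\}$. For $a\in A$, $D_a=\Big(\bigcup_{b\in N_2(a)}C_A(b)\cup N_2(a)\Big)\cap U$ and $\hat D_a=\Big(\bigcup_{b\in \hat N_2(a)}\hat C_A(b)\cup \hat N_2(a)\Big)\cap U$. *)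

theory Defs
  imports Main
begin

definition graph :: "'a set \<Rightarrow> ('a \<times> 'a) set \<Rightarrow> bool" where
  "graph V E \<longleftrightarrow> E \<subseteq> V \<times> V \<and> sym E \<and> irrefl E"

definition connected_graph :: "'a set \<Rightarrow> ('a \<times> 'a) set \<Rightarrow> bool" where
  "connected_graph V E \<longleftrightarrow> graph V E \<and> (\<forall>u\<in>V. \<forall>v\<in>V. \<exists>n. (u, v) \<in> E ^^ n)"

definition gdist :: "('a \<times> 'a) set \<Rightarrow> 'a \<Rightarrow> 'a \<Rightarrow> nat" where
  "gdist E u v = (LEAST n. (u, v) \<in> E ^^ n)"

definition setdist :: "('a \<times> 'a) set \<Rightarrow> 'a set \<Rightarrow> 'a \<Rightarrow> nat" where
  "setdist E S v = (INF s\<in>S. gdist E s v)"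

definition N2 :: "'a set \<Rightarrow> ('a \<times> 'a) set \<Rightarrow> 'a \<Rightarrow> 'a set" where
  "N2 V E a = {u \<in> V. gdist E u a \<le> 2}"

definition Cl :: "'a set \<Rightarrow> ('a \<times> 'a) set \<Rightarrow> 'a set \<Rightarrow> 'a \<Rightarrow> 'a set" where
  "Cl V E A w = {v \<in> V. gdist E w v < setdist E A v}"

definition Dset :: "'a set \<Rightarrow> ('a \<times> 'a) set \<Rightarrow> 'a set \<Rightarrow> 'a set \<Rightarrow> 'a \<Rightarrow> 'a set" where
  "Dset V E A U a = ((\<Union>b\<in>N2 V E a. Cl V E A b) \<union> N2 V E a) \<inter> U"

end

theory Submission
  imports Defs
begin

lemma relpow_mono_set: fixes R S :: "('a \<times> 'a) set" shows "R \<subseteq> S \<Longrightarrow> (x, y) \<in> R ^^ n \<Longrightarrow> (x, y) \<in> S ^^ n"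
proof (induction n arbitrary: y)
  case 0
  from 0(2) have "x = y" by (rule relpow_0_E)
  then show ?case using relpow_0_I by metis
next
  case (Suc n)
  from Suc.prems(2) obtain z where "(x, z) \<in> R ^^ n" "(z, y) \<in> R" by (rule relpow_Suc_E)
  with Suc show ?case by (meson relpow_Suc_I subsetD)
qed

lemma relpow_sym: "sym R \<Longrightarrow> (x, y) \<in> R ^^ n \<Longrightarrow> (y, x) \<in> R ^^ n"
proof (induction n arbitrary: y)
  case 0 then show ?case by (auto elim: relpow_0_E intro: relpow_0_I)
next
  case (Suc n)
  from Suc.prems(2) obtain z where "(x, z) \<in> R ^^ n" "(z, y) \<in> R" by (rule relpow_Suc_E)
  with Suc show ?case by (meson relpow_Suc_I2 symD)
qed

lemma relpow_in_V: "R \<subseteq> V \<times> V \<Longrightarrow> (x, y) \<in> R ^^ n \<Longrightarrow> x \<in> V \<Longrightarrow> y \<in> V"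
proof (induction n arbitrary: y)
  case 0 then show ?case by (auto elim: relpow_0_E intro: relpow_0_I)
next
  case (Suc n)
  from Suc.prems(2) obtain z where "(x, z) \<in> R ^^ n" "(z, y) \<in> R" by (rule relpow_Suc_E)
  with Suc show ?case by blast
qed

lemma gdist_le: "(u, v) \<in> E ^^ n \<Longrightarrow> gdist E u v \<le> n"
  unfolding gdist_def by (rule Least_le)

lemma gdist_path: "connected_graph V E \<Longrightarrow> u \<in> V \<Longrightarrow> v \<in> V \<Longrightarrow> (u, v) \<in> E ^^ gdist E u v"
  unfolding gdist_def connected_graph_def by (meson LeastI)

lemma gdist_sym: "connected_graph V E \<Longrightarrow> u \<in> V \<Longrightarrow> v \<in> V \<Longrightarrow> gdist E u v = gdist E v u"
proof -
  assume c: "connected_graph V E" "u \<in> V" "v \<in> V"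
  hence s: "sym E" unfolding connected_graph_def graph_def by auto
  have "gdist E v u \<le> gdist E u v" by (rule gdist_le, rule relpow_sym[OF s], rule gdist_path[OF c])
  moreover have "gdist E u v \<le> gdist E v u" by (rule gdist_le, rule relpow_sym[OF s], rule gdist_path[OF c(1,3,2)])
  ultimately show ?thesis by simp
qed

lemma gdist_tri: "connected_graph V E \<Longrightarrow> u \<in> V \<Longrightarrow> v \<in> V \<Longrightarrow> w \<in> V \<Longrightarrow>
   gdist E u w \<le> gdist E u v + gdist E v w"
  by (meson gdist_le gdist_path relpow_trans)

lemma gdist_mono: "connected_graph V Eh \<Longrightarrow> Eh \<subseteq> E \<Longrightarrow> u \<in> V \<Longrightarrow> v \<in> V \<Longrightarrow>
   gdist E u v \<le> gdist Eh u v"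
  by (meson gdist_le gdist_path relpow_mono_set)

lemma gdist_self: "gdist E a a = 0"
  by (meson gdist_le relpow_0_I le_zero_eq)

lemma setdist_le: "a \<in> A \<Longrightarrow> setdist E A v \<le> gdist E a v"
  unfolding setdist_def by (rule cINF_lower) auto

theorem lemma7:
  fixes V :: "'a set" and E Eh :: "('a \<times> 'a) set" and A U :: "'a set"
  assumes "connected_graph V E"
    and "connected_graph V Eh"
    and "Eh \<subseteq> E"
    and "A \<subseteq> V" and "A \<noteq> {}"
    and "U \<subseteq> V"
    and "\<forall>u \<in> (\<Union>a\<in>A. N2 V Eh a). \<forall>v \<in> U. gdist E u v = gdist Eh u v"
  shows "\<forall>a\<in>A. Dset V E A U a = Dset V Eh A U a"
proof
  fix a assume aA: "a \<in> A"
  note cE = assms(1) and cH = assms(2)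
  have EV: "E \<subseteq> V \<times> V" and HV: "Eh \<subseteq> V \<times> V" and sH: "sym Eh"
    using cE cH unfolding connected_graph_def graph_def by auto
  have selfN: "x \<in> N2 V Eh x" if "x \<in> V" for x
    using that by (simp add: N2_def gdist_self)
  have eqA: "gdist E x v = gdist Eh x v" if "x \<in> A" "v \<in> U" for x v
    using assms(7) selfN assms(4) that by blast
  have sdeq: "setdist E A v = setdist Eh A v" if "v \<in> U" for v
    unfolding setdist_def using eqA[OF _ that] by (metis (no_types, lifting) image_cong)
  have aV: "a \<in> V" using aA assms(4) by blast
  have N2sub: "N2 V Eh a \<subseteq> N2 V E a"
    unfolding N2_def using gdist_mono[OF cH assms(3)] aV by (auto intro: order_trans)
  have eqN: "gdist E b v = gdist Eh b v" if "b \<in> N2 V Eh a" "v \<in> U" for b v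
    using assms(7) aA that by blast
  show "Dset V E A U a = Dset V Eh A U a"
  proof
    show "Dset V Eh A U a \<subseteq> Dset V E A U a"
    proof
      fix v assume v: "v \<in> Dset V Eh A U a"
      hence vU: "v \<in> U" unfolding Dset_def by auto
      show "v \<in> Dset V E A U a"
      proof (cases "v \<in> N2 V Eh a")
        case True then show ?thesis using N2sub vU unfolding Dset_def by auto
      next
        case False
        then obtain b where b: "b \<in> N2 V Eh a" "v \<in> Cl V Eh A b" using v unfolding Dset_def by auto
        have "v \<in> Cl V E A b" using b eqN[OF b(1) vU] sdeq[OF vU] unfolding Cl_def by auto
        then show ?thesis using b N2sub vU unfolding Dset_def by auto
      qed
    qed
  next
    show "Dset V E A U a \<subseteq> Dset V Eh A U a"
    proof
      fix v assume v: "v \<in> Dset V E A U a"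
      hence vU: "v \<in> U" unfolding Dset_def by auto
      hence vV: "v \<in> V" using assms(6) by auto
      define d where "d = gdist Eh a v"
      have dE: "gdist E a v = d" using eqA[OF aA vU] d_def by simp
      show "v \<in> Dset V Eh A U a"
      proof (cases "d \<le> 2")
        case True
        hence "v \<in> N2 V Eh a" unfolding N2_def using vV gdist_sym[OF cH aV vV] d_def by auto
        then show ?thesis using vU unfolding Dset_def by auto
      next
        case False
        have lt: "d - 2 < setdist E A v"
        proof (cases "v \<in> N2 V E a")
          case True
          hence "gdist E a v \<le> 2" using gdist_sym[OF cE aV vV] unfolding N2_def by auto
          with False dE show ?thesis by simp
        next
          case nN: False
          then obtain b where b: "b \<in> N2 V E a" "v \<in> Cl V E A b" using v unfolding Dset_def by auto
          have bV: "b \<in> V" and bd: "gdist E b a \<le> 2" using b unfolding N2_def by auto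
          have lt1: "gdist E b v < setdist E A v" using b unfolding Cl_def by auto
          have "d \<le> gdist E a b + gdist E b v" using gdist_tri[OF cE aV bV vV] dE by simp
          moreover have "gdist E a b = gdist E b a" using gdist_sym[OF cE aV bV] .
          ultimately show ?thesis using bd lt1 by linarith
        qed
        have "2 + (d - 2) = d" using False by simp
        hence "(a, v) \<in> Eh ^^ (2 + (d - 2))" using gdist_path[OF cH aV vV] d_def by metis
        moreover have "Eh ^^ (2 + (d - 2)) = Eh ^^ 2 O Eh ^^ (d - 2)" by (rule relpow_add)
        ultimately obtain b' where b': "(a, b') \<in> Eh ^^ 2" "(b', v) \<in> Eh ^^ (d - 2)"
          by blast
        have b'V: "b' \<in> V" using relpow_in_V[OF HV b'(1) aV] .
        have "(b', a) \<in> Eh ^^ 2" using relpow_sym[OF sH b'(1)] .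
        hence "b' \<in> N2 V Eh a" unfolding N2_def using b'V gdist_le by auto
        moreover have "v \<in> Cl V Eh A b'"
          unfolding Cl_def using vV gdist_le[OF b'(2)] lt sdeq[OF vU] by auto
        ultimately show ?thesis using vU unfolding Dset_def by auto
      qed
    qed
  qed
qed

end
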